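(* Let $F$ be a compact metric space, $Y$ a normed space, and $S\colon F\to Y$ a continuous mapping. Then for every integer $n\ge2$, \[ e_n^{\mathrm{cont}}(S)\le 2\, e_{2^{n-2}}^{\mathrm{cont\text{-}non}}(S). \]
   Context: An algorithm using $n$ adaptive continuous measurements is a map $A_n\colon F\to Y$ of the form $A_n(f)=\Phi(y_1,\dots,y_n)$, where $y_1=\lambda_1(f)$ for a continuous $\lambda_1\colon F\to\mathbb{R}$ and, for $k\ge2$, $y_k=\lambda_k^{(y_1,\dots,y_{k-1})}(f)$ with continuous functionals $\lambda_k^{(y_1,\dots,y_{k-1})}\colon F\to\mathbb{R}$ whose choice may depend arbitrarily on the previously computed values; $\Phi\colon\mathbb{R}^n\to Y$ is arbitrary. $e_n^{\mathrm{cont}}(S):=\inf_{A_n}\sup_{f\in F}\|S(f)-A_n(f)\|_Y$ over all such algorithms. $e_k^{\mathrm{cont\text{-}non}}(S):=\inf\{\sup_{f\in F}\|S(f)-\Phi(N(f))\|_Y : N\colon F\to\mathbb{R}^k\text{ continuous},\ \Phi\colon\mathbb{R}^k\to Y\text{ arbitrary}\}$. *)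

theory Defs
  imports "HOL-Analysis.Analysis"
begin

text \<open>Adaptive information: measurement functionals lam k ys (the k-th functional,
  0-based, chosen depending on the list ys of the previously computed values).
  adaptive_info lam k f is the list [y_1, ..., y_k] of the first k computed values.\<close>
fun adaptive_info :: "(nat \<Rightarrow> real list \<Rightarrow> 'a \<Rightarrow> real) \<Rightarrow> nat \<Rightarrow> 'a \<Rightarrow> real list" where
  "adaptive_info lam 0 f = []"
| "adaptive_info lam (Suc k) f =
     adaptive_info lam k f @ [lam k (adaptive_info lam k f) f]"

definition wc_error :: "'a set \<Rightarrow> ('a \<Rightarrow> 'b::real_normed_vector) \<Rightarrow> ('a \<Rightarrow> 'b) \<Rightarrow> ereal" where
  "wc_error F S A = (SUP f\<in>F. ereal (norm (S f - A f)))"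

definition e_cont :: "'a::topological_space set \<Rightarrow> ('a \<Rightarrow> 'b::real_normed_vector) \<Rightarrow> nat \<Rightarrow> ereal" where
  "e_cont F S n =
     (INF A\<in>{(\<lambda>f. Phi (adaptive_info lam n f)) | (lam :: nat \<Rightarrow> real list \<Rightarrow> 'a \<Rightarrow> real) (Phi :: real list \<Rightarrow> 'b).
                 \<forall>k<n. \<forall>ys. continuous_on F (lam k ys)}.
        wc_error F S A)"

text \<open>k-th minimal error with nonadaptive continuous information N : F \<rightarrow> R^k
  (given componentwise by continuous functionals N 0, ..., N (k-1)).\<close>
definition e_cont_non :: "'a::topological_space set \<Rightarrow> ('a \<Rightarrow> 'b::real_normed_vector) \<Rightarrow> nat \<Rightarrow> ereal" where
  "e_cont_non F S k =
     (INF A\<in>{(\<lambda>f. Phi (map (\<lambda>i::nat. N i f) [0..<k])) | (N :: nat \<Rightarrow> 'a \<Rightarrow> real) (Phi :: real list \<Rightarrow> 'b).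
                 \<forall>i<k. continuous_on F (N i)}.
        wc_error F S A)"

end

theory Submission
  imports Defs
begin

definition wgt :: "real \<Rightarrow> real \<Rightarrow> real" where
  "wgt c s = max 0 (min 1 ((1/2 - s) * inverse (1/2 - c)))"

definition snap :: "real \<Rightarrow> int \<Rightarrow> real \<Rightarrow> real" where
  "snap c L u = u - (\<Sum>z\<in>{-L..L}. (u - of_int z) * wgt c \<bar>u - of_int z\<bar>)"

lemma wgt_zero: "c < 1/2 \<Longrightarrow> 1/2 \<le> s \<Longrightarrow> wgt c s = 0"
proof -
  assume "c < 1/2" "1/2 \<le> s"
  hence "(1/2 - s) * inverse (1/2 - c) \<le> 0" by (intro mult_nonpos_nonneg) auto
  thus ?thesis unfolding wgt_def by simp
qed

lemma wgt_one: "c < 1/2 \<Longrightarrow> s \<le> c \<Longrightarrow> wgt c s = 1"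
  unfolding wgt_def by (auto simp: field_simps)

lemma wgt_bounds: "0 \<le> wgt c s" "wgt c s \<le> 1"
  unfolding wgt_def by auto

lemma int_dist_ge1: "z \<noteq> (z'::int) \<Longrightarrow> 1 \<le> \<bar>of_int z - (of_int z'::real)\<bar>"
proof -
  assume "z \<noteq> z'"
  hence "1 \<le> \<bar>z - z'\<bar>" by linarith
  hence "(1::real) \<le> of_int \<bar>z - z'\<bar>" by linarith
  thus ?thesis by simp
qed

lemma snap_int:
  assumes c: "0 \<le> c" "c < 1/2" and uz: "\<bar>u - of_int z\<bar> \<le> c" and zL: "-L \<le> z" "z \<le> L"
  shows "snap c L u = of_int z"
proof -
  have z: "z \<in> {-L..L}" using zL by auto
  have rest: "(\<Sum>z'\<in>{-L..L} - {z}. (u - of_int z') * wgt c \<bar>u - of_int z'\<bar>) = 0"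
  proof (intro sum.neutral ballI)
    fix z' assume "z' \<in> {-L..L} - {z}"
    hence "z' \<noteq> z" by auto
    hence "1 \<le> \<bar>of_int z - (of_int z'::real)\<bar>" using int_dist_ge1 by metis
    hence "1/2 \<le> \<bar>u - of_int z'\<bar>" using uz c by linarith
    thus "(u - of_int z') * wgt c \<bar>u - of_int z'\<bar> = 0" using wgt_zero[OF c(2)] by simp
  qed
  have "(\<Sum>z'\<in>{-L..L}. (u - of_int z') * wgt c \<bar>u - of_int z'\<bar>)
      = (u - of_int z) * wgt c \<bar>u - of_int z\<bar> + (\<Sum>z'\<in>{-L..L} - {z}. (u - of_int z') * wgt c \<bar>u - of_int z'\<bar>)"
    by (rule sum.remove[OF _ z]) simp
  also have "\<dots> = u - of_int z" using rest wgt_one[OF c(2) uz] by simp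
  finally show ?thesis unfolding snap_def by simp
qed

lemma snap_disp:
  assumes c: "c < 1/2"
  shows "\<bar>snap c L u - u\<bar> \<le> 1/2"
proof (cases "\<exists>z\<in>{-L..L}. \<bar>u - of_int z\<bar> < 1/2")
  case True
  then obtain z where z: "z \<in> {-L..L}" "\<bar>u - of_int z\<bar> < 1/2" by blast
  have rest: "(\<Sum>z'\<in>{-L..L} - {z}. (u - of_int z') * wgt c \<bar>u - of_int z'\<bar>) = 0"
  proof (intro sum.neutral ballI)
    fix z' assume "z' \<in> {-L..L} - {z}"
    hence "z' \<noteq> z" by auto
    hence "1 \<le> \<bar>of_int z - (of_int z'::real)\<bar>" using int_dist_ge1 by metis
    hence "1/2 \<le> \<bar>u - of_int z'\<bar>" using z by linarith
    thus "(u - of_int z') * wgt c \<bar>u - of_int z'\<bar> = 0" using wgt_zero[OF c] by simp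
  qed
  have "(\<Sum>z'\<in>{-L..L}. (u - of_int z') * wgt c \<bar>u - of_int z'\<bar>)
      = (u - of_int z) * wgt c \<bar>u - of_int z\<bar> + (\<Sum>z'\<in>{-L..L} - {z}. (u - of_int z') * wgt c \<bar>u - of_int z'\<bar>)"
    by (rule sum.remove[OF _ z(1)]) simp
  also have "\<dots> = (u - of_int z) * wgt c \<bar>u - of_int z\<bar>" using rest by simp
  finally have eq: "snap c L u - u = - ((u - of_int z) * wgt c \<bar>u - of_int z\<bar>)" unfolding snap_def by simp
  have "\<bar>(u - of_int z) * wgt c \<bar>u - of_int z\<bar>\<bar> \<le> \<bar>u - of_int z\<bar> * 1"
    unfolding abs_mult using wgt_bounds[of c] by (intro mult_left_mono) auto
  thus ?thesis using eq z(2) by simp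
next
  case False
  have "(\<Sum>z'\<in>{-L..L}. (u - of_int z') * wgt c \<bar>u - of_int z'\<bar>) = 0"
    by (rule sum.neutral) (use False wgt_zero[OF c] in \<open>auto simp: not_less\<close>)
  thus ?thesis unfolding snap_def by simp
qed

lemma continuous_on_snap [continuous_intros]:
  "continuous_on A g \<Longrightarrow> continuous_on A (\<lambda>x. snap c L (g x))"
  unfolding snap_def wgt_def by (intro continuous_intros) auto

lemma infdist_Ints_le: "infdist (u::real) \<int> \<le> 1/2"
proof -
  have "infdist u \<int> \<le> dist u (of_int (round u))" by (rule infdist_le) simp
  also have "\<dots> \<le> 1/2" using of_int_round_abs_le[of u] by (simp add: dist_real_def abs_minus_commute)
  finally show ?thesis .
qed

lemma infdist_Ints_obtain:
  obtains z :: int where "infdist (u::real) \<int> = \<bar>u - of_int z\<bar>"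
proof -
  have ne: "(\<int>::real set) \<noteq> {}" using Ints_0 by blast
  obtain x where "x \<in> (\<int>::real set)" "infdist u \<int> = dist u x"
    using infdist_attains_inf[OF closed_Ints ne] by blast
  then obtain z where "x = of_int z" by (auto elim: Ints_cases)
  thus ?thesis using that \<open>infdist u \<int> = dist u x\<close> by (simp add: dist_real_def)
qed

lemma infdist_Ints_half: "infdist (u::real) \<int> = 1/2 \<Longrightarrow> 2 * u \<in> \<int>"
proof -
  assume h: "infdist u \<int> = 1/2"
  obtain z :: int where "infdist u \<int> = \<bar>u - of_int z\<bar>" by (rule infdist_Ints_obtain)
  with h have "u = of_int z + 1/2 \<or> u = of_int z - 1/2" by linarith
  hence "2 * u = of_int (2*z+1) \<or> 2 * u = of_int (2*z - 1)" by auto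
  thus ?thesis by (metis Ints_of_int)
qed

lemma infdist_Ints_in: "u \<in> \<int> \<Longrightarrow> infdist (u::real) \<int> = 0"
  by simp

lemma continuous_on_Max_fam:
  assumes "finite A" "A \<noteq> {}" "\<And>a. a \<in> A \<Longrightarrow> continuous_on S (f a)"
  shows "continuous_on S (\<lambda>x. Max ((\<lambda>a. f a x :: real) ` A))"
  using assms
proof (induction A rule: finite_ne_induct)
  case (singleton a) thus ?case by simp
next
  case (insert b A)
  have "continuous_on S (\<lambda>x. max (f b x) (Max ((\<lambda>a. f a x) ` A)))"
    using insert by (intro continuous_on_max) auto
  moreover have "\<And>x. Max ((\<lambda>a. f a x) ` insert b A) = max (f b x) (Max ((\<lambda>a. f a x) ` A))"
    using insert by (simp add: Max_insert)
  ultimately show ?case by simp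
qed

lemma continuous_on_Min_fam:
  assumes "finite A" "A \<noteq> {}" "\<And>a. a \<in> A \<Longrightarrow> continuous_on S (f a)"
  shows "continuous_on S (\<lambda>x. Min ((\<lambda>a. f a x :: real) ` A))"
  using assms
proof (induction A rule: finite_ne_induct)
  case (singleton a) thus ?case by simp
next
  case (insert b A)
  have "continuous_on S (\<lambda>x. min (f b x) (Min ((\<lambda>a. f a x) ` A)))"
    using insert by (intro continuous_on_min) auto
  moreover have "\<And>x. Min ((\<lambda>a. f a x) ` insert b A) = min (f b x) (Min ((\<lambda>a. f a x) ` A))"
    using insert by (simp add: Min_insert)
  ultimately show ?case by simp
qed

definition OS :: "nat \<Rightarrow> nat \<Rightarrow> (nat \<Rightarrow> real) \<Rightarrow> real" where
  "OS m p r = Min ((\<lambda>J. Max (r ` J)) ` {J. J \<subseteq> {..<m} \<and> card J = p})"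

lemma OS_fam_finite: "finite {J. J \<subseteq> {..<m::nat} \<and> card J = p}"
  by (rule finite_subset[of _ "Pow {..<m}"]) auto

lemma OS_fam_ne: "p \<le> m \<Longrightarrow> {J. J \<subseteq> {..<m::nat} \<and> card J = p} \<noteq> {}"
proof -
  assume "p \<le> m"
  hence "{..<p} \<in> {J. J \<subseteq> {..<m::nat} \<and> card J = p}" by auto
  thus ?thesis by blast
qed

lemma OS_attain:
  assumes "1 \<le> p" "p \<le> m"
  obtains J where "J \<subseteq> {..<m}" "card J = p" "\<And>i. i \<in> J \<Longrightarrow> r i \<le> OS m p r"
proof -
  let ?A = "{J. J \<subseteq> {..<m::nat} \<and> card J = p}"
  have "OS m p r \<in> (\<lambda>J. Max (r ` J)) ` ?A"
    unfolding OS_def using OS_fam_finite OS_fam_ne[OF assms(2)] by (intro Min_in) auto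
  then obtain J where J: "J \<subseteq> {..<m}" "card J = p" "OS m p r = Max (r ` J)" by auto
  have fin: "finite J" using J(1) finite_subset by blast
  show ?thesis
  proof (rule that[OF J(1,2)])
    fix i assume "i \<in> J" thus "r i \<le> OS m p r" using J(3) fin by simp
  qed
qed

lemma OS_le:
  assumes "J \<subseteq> {..<m}" "card J = p"
  shows "OS m p r \<le> Max (r ` J)"
  unfolding OS_def using assms OS_fam_finite by (intro Min_le) auto

lemma continuous_on_OS:
  assumes "1 \<le> p" "p \<le> m" "\<And>i. i < m \<Longrightarrow> continuous_on S (R i)"
  shows "continuous_on S (\<lambda>x. OS m p (\<lambda>i. R i x))"
  unfolding OS_def
proof (rule continuous_on_Min_fam[where f = "\<lambda>J x. Max ((\<lambda>i. R i x) ` J)"])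
  show "finite {J. J \<subseteq> {..<m} \<and> card J = p}" by (rule OS_fam_finite)
  show "{J. J \<subseteq> {..<m} \<and> card J = p} \<noteq> {}" using OS_fam_ne assms by blast
  fix J assume "J \<in> {J. J \<subseteq> {..<m} \<and> card J = p}"
  hence J: "J \<subseteq> {..<m} \<and> card J = p" by simp
  have fJ: "finite J" using J finite_subset[of J "{..<m}"] by auto
  have neJ: "J \<noteq> {}" using J assms(1) by auto
  show "continuous_on S (\<lambda>x. Max ((\<lambda>i. R i x) ` J))"
    by (rule continuous_on_Max_fam[OF fJ neJ]) (use J assms(3) in auto)
qed

definition step1 :: "real \<Rightarrow> int \<Rightarrow> real \<Rightarrow> real \<Rightarrow> real" where
  "step1 h L y u = (if y < 1/2 then h * snap y L (u / h) else u)"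

lemma step_disp:
  assumes "h > 0" shows "\<bar>step1 h L y u - u\<bar> \<le> h/2"
proof (cases "y < 1/2")
  case True
  have "step1 h L y u - u = h * (snap y L (u/h) - u/h)"
    using True assms by (simp add: step1_def algebra_simps)
  hence "\<bar>step1 h L y u - u\<bar> = h * \<bar>snap y L (u/h) - u/h\<bar>"
    using assms by (simp add: abs_mult)
  also have "\<dots> \<le> h * (1/2)" using snap_disp[OF True] assms by (intro mult_left_mono) auto
  finally show ?thesis by simp
next
  case False thus ?thesis using assms by (simp add: step1_def)
qed

lemma continuous_on_step1 [continuous_intros]:
  "continuous_on A g \<Longrightarrow> continuous_on A (\<lambda>x. step1 h L y (g x))"
  unfolding step1_def by (cases "y < 1/2"; cases "h = 0") (auto intro!: continuous_intros)

lemma step_good: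
  fixes x :: "nat \<Rightarrow> real" and L :: int
  assumes h: "h > 0" and q: "q < m" and d: "d \<le> 2*q+1" "d \<le> m"
    and good: "m - d \<le> card {i. i<m \<and> x i / h \<in> \<int>}"
    and bnd: "\<And>i. i<m \<Longrightarrow> \<bar>x i / h\<bar> \<le> of_int L - 1"
    and y: "y = OS m (m-q) (\<lambda>i. infdist (x i / h) \<int>)"
  shows "m - q \<le> card {i. i<m \<and> step1 h L y (x i) / (h/2) \<in> \<int>}"
proof -
  define R where "R = (\<lambda>i. infdist (x i / h) \<int>)"
  define T where "T = {i. i<m \<and> step1 h L y (x i) / (h/2) \<in> \<int>}"
  have finT: "finite T" unfolding T_def by (rule finite_subset[of _ "{..<m}"]) auto
  have two: "\<And>u. u / (h/2) = 2 * (u / h)" using h by (simp add: field_simps)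
  show ?thesis
  proof (cases "y < 1/2")
    case True
    have yR: "y = OS m (m-q) R" unfolding R_def y by simp
    obtain J where J: "J \<subseteq> {..<m}" "card J = m - q" "\<And>i. i \<in> J \<Longrightarrow> R i \<le> OS m (m-q) R"
      by (rule OS_attain[of "m-q" m R]) (use q in auto)
    note J = J(1,2) J(3)[folded yR]
    have "J \<subseteq> T"
    proof
      fix i assume i: "i \<in> J"
      hence im: "i < m" using J(1) by auto
      obtain z :: int where z: "R i = \<bar>x i / h - of_int z\<bar>"
        unfolding R_def by (rule infdist_Ints_obtain)
      have Rle: "R i \<le> 1/2" unfolding R_def by (rule infdist_Ints_le)
      have y0: "0 \<le> y" using J(3)[OF i] z by linarith
      have "\<bar>x i / h\<bar> \<le> of_int L - 1" using bnd im by blast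
      hence zL: "-L \<le> z" "z \<le> L" using z Rle by linarith+
      have "snap y L (x i / h) = of_int z"
        by (rule snap_int[OF y0 True _ zL]) (use J(3)[OF i] z in linarith)
      hence "step1 h L y (x i) / (h/2) = of_int (2*z)"
        using True h by (simp add: step1_def two)
      thus "i \<in> T" unfolding T_def using im by simp
    qed
    from card_mono[OF finT this] show ?thesis using J(2) unfolding T_def by simp
  next
    case False
    hence st: "\<And>u. step1 h L y u = u" by (simp add: step1_def)
    define Lo where "Lo = {i. i<m \<and> R i < 1/2}"
    define Hi where "Hi = {i. i<m \<and> \<not> R i < 1/2}"
    define Z0 where "Z0 = {i. i<m \<and> x i / h \<in> \<int>}"
    have finLo: "finite Lo" unfolding Lo_def by (rule finite_subset[of _ "{..<m}"]) auto
    have finHi: "finite Hi" unfolding Hi_def by (rule finite_subset[of _ "{..<m}"]) auto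
    have finZ0: "finite Z0" unfolding Z0_def by (rule finite_subset[of _ "{..<m}"]) auto
    have cLo: "card Lo < m - q"
    proof (rule ccontr)
      assume "\<not> card Lo < m - q"
      then obtain J where J: "J \<subseteq> Lo" "card J = m - q" "finite J"
        using obtain_subset_with_card_n[of "m-q" Lo] by force
      have Jne: "J \<noteq> {}" using J(2) q by auto
      have "y \<le> Max (R ` J)" using OS_le[of J m "m-q" R] J y Lo_def R_def by auto
      also have "Max (R ` J) < 1/2" using J Jne unfolding Lo_def by (subst Max_less_iff) auto
      finally show False using False by simp
    qed
    have "Lo \<union> Hi = {..<m}" "Lo \<inter> Hi = {}" unfolding Lo_def Hi_def by auto
    hence "card Lo + card Hi = m" using card_Un_disjoint[OF finLo finHi] by simp
    hence cHi: "q + 1 \<le> card Hi" using cLo by linarith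
    have Z0Lo: "Z0 \<subseteq> Lo" unfolding Z0_def Lo_def R_def by auto
    hence disj: "Z0 \<inter> Hi = {}" unfolding Lo_def Hi_def by auto
    have sub: "Z0 \<union> Hi \<subseteq> T"
    proof
      fix i assume "i \<in> Z0 \<union> Hi"
      then consider "i \<in> Z0" | "i \<in> Hi" by blast
      thus "i \<in> T"
      proof cases
        case 1
        hence im: "i < m" and xi: "x i / h \<in> \<int>" by (auto simp: Z0_def)
        have "2 * (x i / h) \<in> \<int>" using xi by (intro Ints_mult) auto
        moreover have eq: "step1 h L y (x i) / (h/2) = 2 * (x i / h)" by (simp only: st two)
        ultimately have "step1 h L y (x i) / (h/2) \<in> \<int>" by (simp only:)
        thus ?thesis unfolding T_def using im by blast
      next
        case 2
        hence "R i = 1/2" using infdist_Ints_le[of "x i / h"] unfolding Hi_def R_def by auto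
        hence "2 * (x i / h) \<in> \<int>" unfolding R_def by (rule infdist_Ints_half)
        moreover have eq: "step1 h L y (x i) / (h/2) = 2 * (x i / h)" by (simp only: st two)
        ultimately have "step1 h L y (x i) / (h/2) \<in> \<int>" by (simp only:)
        thus ?thesis using 2 unfolding Hi_def T_def by blast
      qed
    qed
    have "card (Z0 \<union> Hi) = card Z0 + card Hi" by (rule card_Un_disjoint[OF finZ0 finHi disj])
    moreover have "m - d \<le> card Z0" using good unfolding Z0_def .
    ultimately have "m - q \<le> card (Z0 \<union> Hi)" using cHi d by linarith
    also have "\<dots> \<le> card T" by (rule card_mono[OF finT sub])
    finally show ?thesis unfolding T_def .
  qed
qed

lemma geom_sum_W: "(\<Sum>i<k. (W-1) * W^i) = W^k - (1::real)"
  by (induction k) (auto simp: algebra_simps)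

lemma enc_zero:
  fixes d :: "nat \<Rightarrow> real"
  assumes W: "W \<ge> 1" and dI: "\<And>i. i<k \<Longrightarrow> d i \<in> \<int>" and db: "\<And>i. i<k \<Longrightarrow> \<bar>d i\<bar> \<le> W - 1"
    and s: "(\<Sum>i<k. d i * W^i) = 0"
  shows "\<forall>i<k. d i = 0"
  using dI db s
proof (induction k)
  case 0 thus ?case by simp
next
  case (Suc k)
  have rest: "\<bar>\<Sum>i<k. d i * W^i\<bar> \<le> W^k - 1"
  proof -
    have "\<bar>\<Sum>i<k. d i * W^i\<bar> \<le> (\<Sum>i<k. \<bar>d i * W^i\<bar>)" by (rule sum_abs)
    also have "\<dots> \<le> (\<Sum>i<k. (W-1) * W^i)"
    proof (rule sum_mono)
      fix i assume "i \<in> {..<k}"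
      hence "\<bar>d i\<bar> \<le> W - 1" using Suc.prems(2) by simp
      moreover have "0 \<le> W^i" using W by simp
      ultimately have "\<bar>d i\<bar> * W^i \<le> (W-1) * W^i" by (rule mult_right_mono)
      thus "\<bar>d i * W^i\<bar> \<le> (W-1) * W^i" using W by (simp add: abs_mult)
    qed
    finally show ?thesis using geom_sum_W by simp
  qed
  have eq: "(\<Sum>i<k. d i * W^i) + d k * W^k = 0" using Suc.prems(3) by simp
  have dk: "d k = 0"
  proof (rule ccontr)
    assume "d k \<noteq> 0"
    moreover have "d k \<in> \<int>" using Suc.prems(1)[of k] by simp
    ultimately have "1 \<le> \<bar>d k\<bar>" using Ints_nonzero_abs_ge1 by blast
    hence "1 * W^k \<le> \<bar>d k\<bar> * W^k" using W by (intro mult_right_mono) auto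
    hence "W^k \<le> \<bar>d k * W^k\<bar>" using W by (simp add: abs_mult)
    moreover have "\<bar>d k * W^k\<bar> = \<bar>\<Sum>i<k. d i * W^i\<bar>" using eq by linarith
    ultimately show False using rest by linarith
  qed
  hence s0: "(\<Sum>i<k. d i * W^i) = 0" using eq by simp
  have "\<forall>i<k. d i = 0"
    by (rule Suc.IH) (use Suc.prems(1,2) s0 in auto)
  thus ?case using dk less_Suc_eq by auto
qed

definition enc :: "nat \<Rightarrow> real \<Rightarrow> (nat \<Rightarrow> real) \<Rightarrow> real" where
  "enc k W x = (\<Sum>i<k. x i * W^i)"

lemma continuous_on_enc:
  "(\<And>i. i < k \<Longrightarrow> continuous_on A (\<lambda>f. X f i)) \<Longrightarrow> continuous_on A (\<lambda>f. enc k W (X f))"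
  unfolding enc_def by (intro continuous_intros) auto

lemma enc_inj:
  assumes W: "W \<ge> 2*M+1" "M \<ge> 0" and a: "\<And>i. i<k \<Longrightarrow> a i \<in> \<int> \<and> \<bar>a i\<bar> \<le> M"
    and b: "\<And>i. i<k \<Longrightarrow> b i \<in> \<int> \<and> \<bar>b i\<bar> \<le> M" and e: "enc k W a = enc k W b"
  shows "\<forall>i<k. a i = b i"
proof -
  have "\<forall>i<k. a i - b i = 0"
  proof (rule enc_zero[where W=W])
    show "W \<ge> 1" using W by simp
    fix i assume "i < k"
    thus "a i - b i \<in> \<int>" using a b by auto
    show "\<bar>a i - b i\<bar> \<le> W - 1" using a[OF \<open>i<k\<close>] b[OF \<open>i<k\<close>] W by linarith
  next
    have "(\<Sum>i<k. (a i - b i) * W^i) = enc k W a - enc k W b"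
      unfolding enc_def by (simp add: left_diff_distrib sum_subtractf)
    thus "(\<Sum>i<k. (a i - b i) * W^i) = 0" using e by simp
  qed
  thus ?thesis by auto
qed

lemma ai_length: "length (adaptive_info lam k f) = k"
  by (induction k) auto

lemma ai_take: "j \<le> k \<Longrightarrow> take j (adaptive_info lam k f) = adaptive_info lam j f"
proof (induction k)
  case 0 thus ?case by simp
next
  case (Suc k)
  show ?case
  proof (cases "j = Suc k")
    case True thus ?thesis using ai_length[of lam "Suc k" f] by simp
  next
    case False
    hence "j \<le> k" using Suc.prems by simp
    thus ?thesis using Suc.IH ai_length[of lam k f] by simp
  qed
qed

lemma ai_nth: "j < k \<Longrightarrow> adaptive_info lam k f ! j = lam j (adaptive_info lam j f) f"
proof -
  assume "j < k"
  have t: "take (Suc j) (adaptive_info lam k f) = adaptive_info lam (Suc j) f"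
    by (rule ai_take) (use \<open>j<k\<close> in simp)
  have "adaptive_info lam k f ! j = take (Suc j) (adaptive_info lam k f) ! j" by simp
  also have "\<dots> = adaptive_info lam (Suc j) f ! j" by (simp only: t)
  also have "\<dots> = lam j (adaptive_info lam j f) f" by (simp add: nth_append ai_length)
  finally show ?thesis .
qed

definition hh :: "nat \<Rightarrow> nat \<Rightarrow> real" where "hh n j = 2 ^ (n - 1 - j)"
definition dd :: "nat \<Rightarrow> nat \<Rightarrow> nat" where "dd m j = m div 2 ^ j"

primrec X1 :: "nat \<Rightarrow> int \<Rightarrow> nat \<Rightarrow> real list \<Rightarrow> real \<Rightarrow> real" where
  "X1 n L 0 ys u = u"
| "X1 n L (Suc j) ys u = step1 (hh n j) L (ys ! j) (X1 n L j ys u)"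

definition meas :: "nat \<Rightarrow> nat \<Rightarrow> nat \<Rightarrow> (nat \<Rightarrow> real) \<Rightarrow> real" where
  "meas n m j x = OS m (m - dd m (Suc j)) (\<lambda>i. infdist (x i / hh n j) \<int>)"

lemma X1_cong: "(\<And>i. i < j \<Longrightarrow> ys ! i = ys' ! i) \<Longrightarrow> X1 n L j ys u = X1 n L j ys' u"
proof (induction j)
  case 0 show ?case by simp
next
  case (Suc j)
  have "X1 n L j ys u = X1 n L j ys' u" using Suc.IH Suc.prems by simp
  moreover have "ys ! j = ys' ! j" using Suc.prems by simp
  ultimately show ?case by simp
qed

lemma continuous_on_X1 [continuous_intros]:
  assumes "continuous_on A g" shows "continuous_on A (\<lambda>f. X1 n L j ys (g f))"
proof (induction j)
  case 0 thus ?case using assms by simp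
next
  case (Suc j) thus ?case by (simp only: X1.simps) (rule continuous_on_step1)
qed

lemma hh_ge1: "1 \<le> hh n j" unfolding hh_def by simp
lemma hh_le: "hh n j \<le> 2 ^ (n-1)" unfolding hh_def by (intro power_increasing) auto
lemma hh_Suc: "Suc j \<le> n - 1 \<Longrightarrow> hh n (Suc j) = hh n j / 2"
proof -
  assume "Suc j \<le> n - 1"
  hence e: "n - 1 - j = Suc (n - 1 - Suc j)" by arith
  have "hh n j = 2 * hh n (Suc j)" unfolding hh_def e by (simp only: power_Suc)
  thus ?thesis by simp
qed

lemma dd_rec: "dd m j \<le> 2 * dd m (Suc j) + 1"
proof -
  have "dd m (Suc j) = dd m j div 2" unfolding dd_def by (simp only: power_Suc2 div_mult2_eq)
  thus ?thesis by simp
qed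

lemma dd_less: "0 < m \<Longrightarrow> dd m (Suc j) < m"
proof -
  assume "0 < m"
  have two: "(2::nat) \<le> 2 ^ Suc j" using one_le_power[of "2::nat" j] by simp
  have "dd m (Suc j) \<le> m div 2" unfolding dd_def by (rule div_le_mono2) (use two in auto)
  also have "\<dots> < m" using \<open>0<m\<close> by simp
  finally show ?thesis .
qed

lemma chain:
  fixes x0 :: "nat \<Rightarrow> real" and L :: int
  assumes n2: "n \<ge> 2" and m: "m = 2^(n-2)" and bnd: "\<And>i. i<m \<Longrightarrow> \<bar>x0 i\<bar> \<le> B"
    and Lb: "B + real n * 2^n + 1 \<le> of_int L"
    and cons: "\<And>j. j < n-1 \<Longrightarrow> ys ! j = meas n m j (\<lambda>i. X1 n L j ys (x0 i))"
  shows "j \<le> n-1 \<Longrightarrow> m - dd m j \<le> card {i. i<m \<and> X1 n L j ys (x0 i) / hh n j \<in> \<int>}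
           \<and> (\<forall>i<m. \<bar>X1 n L j ys (x0 i) - x0 i\<bar> \<le> real j * 2^(n-1))"
proof (induction j)
  case 0 thus ?case by (simp add: dd_def)
next
  case (Suc j)
  hence j: "j < n - 1" by simp
  from Suc.IH j have IH1: "m - dd m j \<le> card {i. i<m \<and> X1 n L j ys (x0 i) / hh n j \<in> \<int>}"
    and IH2: "\<And>i. i<m \<Longrightarrow> \<bar>X1 n L j ys (x0 i) - x0 i\<bar> \<le> real j * 2^(n-1)" by auto
  define x where "x = (\<lambda>i. X1 n L j ys (x0 i))"
  define h where "h = hh n j"
  have h1: "1 \<le> h" unfolding h_def by (rule hh_ge1)
  have m0: "0 < m" unfolding m by simp
  have pw: "(2::real)^(n-1) \<le> 2^n" by (intro power_increasing) auto
  have xb: "\<And>i. i<m \<Longrightarrow> \<bar>x i / h\<bar> \<le> of_int L - 1"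
  proof -
    fix i assume i: "i<m"
    have "\<bar>x i\<bar> * 1 \<le> \<bar>x i\<bar> * h" using h1 by (intro mult_left_mono) auto
    hence "\<bar>x i / h\<bar> \<le> \<bar>x i\<bar>" using h1 by (simp add: abs_div divide_le_eq)
    also have "\<dots> \<le> \<bar>x0 i\<bar> + real j * 2^(n-1)" using IH2[OF i] unfolding x_def by linarith
    also have "\<dots> \<le> B + real n * 2^n"
    proof -
      have "real j * 2^(n-1) \<le> real n * 2^n" using j pw by (intro mult_mono) auto
      thus ?thesis using bnd[OF i] by linarith
    qed
    finally show "\<bar>x i / h\<bar> \<le> of_int L - 1" using Lb by linarith
  qed
  have y: "ys ! j = OS m (m - dd m (Suc j)) (\<lambda>i. infdist (x i / h) \<int>)"
    using cons[OF j] unfolding meas_def x_def h_def by simp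
  have IH1': "m - dd m j \<le> card {i. i<m \<and> x i / h \<in> \<int>}" using IH1 unfolding x_def h_def .
  have sg: "m - dd m (Suc j) \<le> card {i. i<m \<and> step1 h L (ys!j) (x i) / (h/2) \<in> \<int>}"
    by (rule step_good[OF _ dd_less[OF m0] dd_rec _ IH1' xb y])
       (use h1 in auto, simp add: dd_def div_le_dividend)
  have hs: "hh n (Suc j) = h / 2" unfolding h_def using Suc.prems by (intro hh_Suc) simp
  have part1: "m - dd m (Suc j) \<le> card {i. i<m \<and> X1 n L (Suc j) ys (x0 i) / hh n (Suc j) \<in> \<int>}"
    using sg by (simp add: hs x_def h_def)
  have part2: "\<forall>i<m. \<bar>X1 n L (Suc j) ys (x0 i) - x0 i\<bar> \<le> real (Suc j) * 2^(n-1)"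
  proof (intro allI impI)
    fix i assume i: "i < m"
    have "\<bar>step1 h L (ys!j) (x i) - x i\<bar> \<le> h/2" using h1 by (intro step_disp) simp
    moreover have "h/2 \<le> 2^(n-1)"
    proof -
      have "(0::real) \<le> 2^(n-1)" by simp
      thus ?thesis using hh_le[of n j] h_def by linarith
    qed
    moreover have "\<bar>X1 n L j ys (x0 i) - x0 i\<bar> \<le> real j * 2^(n-1)" by (rule IH2[OF i])
    moreover have "X1 n L (Suc j) ys (x0 i) - x0 i = (step1 h L (ys!j) (x i) - x i) + (X1 n L j ys (x0 i) - x0 i)"
      by (simp add: x_def h_def)
    moreover have "\<bar>(step1 h L (ys!j) (x i) - x i) + (X1 n L j ys (x0 i) - x0 i)\<bar>
        \<le> \<bar>step1 h L (ys!j) (x i) - x i\<bar> + \<bar>X1 n L j ys (x0 i) - x0 i\<bar>" by (rule abs_triangle_ineq)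
    ultimately have "\<bar>X1 n L (Suc j) ys (x0 i) - x0 i\<bar> \<le> 2^(n-1) + real j * 2^(n-1)"
      by linarith
    thus "\<bar>X1 n L (Suc j) ys (x0 i) - x0 i\<bar> \<le> real (Suc j) * 2^(n-1)"
      by (simp add: algebra_simps)
  qed
  show ?case using part1 part2 by blast
qed

lemma chain_final:
  fixes x0 :: "nat \<Rightarrow> real" and L :: int
  assumes n2: "n \<ge> 2" and m: "m = 2^(n-2)" and bnd: "\<And>i. i<m \<Longrightarrow> \<bar>x0 i\<bar> \<le> B"
    and Lb: "B + real n * 2^n + 1 \<le> of_int L"
    and cons: "\<And>j. j < n-1 \<Longrightarrow> ys ! j = meas n m j (\<lambda>i. X1 n L j ys (x0 i))"
    and i: "i < m"
  shows "X1 n L (n-1) ys (x0 i) \<in> \<int>" "\<bar>X1 n L (n-1) ys (x0 i) - x0 i\<bar> \<le> real n * 2^n"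
proof -
  have c: "m - dd m (n-1) \<le> card {i. i<m \<and> X1 n L (n-1) ys (x0 i) / hh n (n-1) \<in> \<int>}
           \<and> (\<forall>i<m. \<bar>X1 n L (n-1) ys (x0 i) - x0 i\<bar> \<le> real (n-1) * 2^(n-1))"
    by (rule chain[OF n2 m bnd Lb cons order_refl])
  have "dd m (n-1) = 0" unfolding dd_def m
  proof (rule div_less)
    show "(2::nat)^(n-2) < 2^(n-1)" using n2 by (intro power_strict_increasing) auto
  qed
  moreover have "hh n (n-1) = 1" unfolding hh_def by simp
  ultimately have cm: "m \<le> card {i. i<m \<and> X1 n L (n-1) ys (x0 i) \<in> \<int>}" using c by simp
  have "{i. i<m \<and> X1 n L (n-1) ys (x0 i) \<in> \<int>} = {..<m}"
    by (rule card_seteq) (use cm in auto)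
  thus "X1 n L (n-1) ys (x0 i) \<in> \<int>" using i by auto
  have "\<bar>X1 n L (n-1) ys (x0 i) - x0 i\<bar> \<le> real (n-1) * 2^(n-1)" using c i by auto
  also have "\<dots> \<le> real n * 2^n" by (intro mult_mono power_increasing) auto
  finally show "\<bar>X1 n L (n-1) ys (x0 i) - x0 i\<bar> \<le> real n * 2^n" .
qed

lemma cont_fst_comp: "continuous_on F h \<Longrightarrow> continuous_on (F \<times> F) (\<lambda>p. h (fst p))"
  by (rule continuous_on_compose2[OF _ continuous_on_fst[OF continuous_on_id]]) auto

lemma cont_snd_comp: "continuous_on F h \<Longrightarrow> continuous_on (F \<times> F) (\<lambda>p. h (snd p))"
  by (rule continuous_on_compose2[OF _ continuous_on_snd[OF continuous_on_id]]) auto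

lemma separation:
  fixes F :: "'a::metric_space set" and S :: "'a \<Rightarrow> 'b::real_normed_vector"
    and N :: "nat \<Rightarrow> 'a \<Rightarrow> real"
  assumes cF: "compact F" and cS: "continuous_on F S" and cN: "\<And>i. i<m \<Longrightarrow> continuous_on F (N i)"
    and m0: "0 < m"
    and err: "\<And>f. f\<in>F \<Longrightarrow> norm (S f - Phi (map (\<lambda>i. N i f) [0..<m])) \<le> r" and eta: "0 < \<eta>"
  shows "\<exists>\<delta>>0. \<forall>f\<in>F. \<forall>g\<in>F. (\<forall>i<m. \<bar>N i f - N i g\<bar> \<le> \<delta>) \<longrightarrow> norm (S f - S g) \<le> 2*r + \<eta>"
proof (cases "F = {}")
  case True thus ?thesis by (intro exI[of _ 1]) auto
next
  case False
  define D where "D = (\<lambda>p. (\<Sum>i<m. \<bar>N i (fst p) - N i (snd p)\<bar>))"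
  define G where "G = (\<lambda>p. norm (S (fst p) - S (snd p)))"
  define \<psi> where "\<psi> = (\<lambda>p. D p + max 0 (2*r + \<eta> - G p))"
  have cD: "continuous_on (F \<times> F) D" unfolding D_def
    by (intro continuous_intros cont_fst_comp cont_snd_comp cN) auto
  have cG: "continuous_on (F \<times> F) G" unfolding G_def
    by (intro continuous_intros cont_fst_comp cont_snd_comp cS)
  have cpsi: "continuous_on (F \<times> F) \<psi>" unfolding \<psi>_def by (intro continuous_intros cD cG)
  have ne: "F \<times> F \<noteq> {}" using False by simp
  obtain p0 where p0: "p0 \<in> F \<times> F" "\<And>p. p \<in> F \<times> F \<Longrightarrow> \<psi> p0 \<le> \<psi> p"
    using continuous_attains_inf[OF compact_Times[OF cF cF] ne cpsi] by blast
  have Dnn: "\<And>p. 0 \<le> D p" unfolding D_def by (intro sum_nonneg) auto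
  have pos: "0 < \<psi> p0"
  proof (cases "D p0 = 0")
    case True
    have "\<forall>i<m. N i (fst p0) = N i (snd p0)"
    proof (intro allI impI)
      fix i assume i: "i < m"
      have "\<bar>N i (fst p0) - N i (snd p0)\<bar> \<le> D p0" unfolding D_def
        by (rule member_le_sum[of i "{..<m}" "\<lambda>i. \<bar>N i (fst p0) - N i (snd p0)\<bar>"]) (use i in auto)
      thus "N i (fst p0) = N i (snd p0)" using True by simp
    qed
    hence eqm: "map (\<lambda>i. N i (fst p0)) [0..<m] = map (\<lambda>i. N i (snd p0)) [0..<m]" by simp
    have f: "fst p0 \<in> F" "snd p0 \<in> F" using p0(1) by auto
    have "G p0 \<le> norm (S (fst p0) - Phi (map (\<lambda>i. N i (fst p0)) [0..<m]))
                 + norm (S (snd p0) - Phi (map (\<lambda>i. N i (snd p0)) [0..<m]))"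
    proof -
      let ?l = "Phi (map (\<lambda>i. N i (snd p0)) [0..<m])"
      have "S (fst p0) - S (snd p0) = (S (fst p0) - ?l) - (S (snd p0) - ?l)" by simp
      hence "G p0 \<le> norm (S (fst p0) - ?l) + norm (S (snd p0) - ?l)"
        unfolding G_def by (metis norm_triangle_ineq4)
      thus ?thesis unfolding eqm .
    qed
    also have "\<dots> \<le> r + r" using err f by (intro add_mono) auto
    finally show ?thesis unfolding \<psi>_def using True eta by simp
  next
    case False thus ?thesis unfolding \<psi>_def using Dnn[of p0] by (simp add: less_le)
  qed
  define \<delta> where "\<delta> = \<psi> p0 / (2 * real m)"
  have dpos: "0 < \<delta>" unfolding \<delta>_def using pos m0 by simp
  show ?thesis
  proof (intro exI[of _ \<delta>] conjI dpos ballI impI)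
    fix f g assume fg: "f \<in> F" "g \<in> F" and cl: "\<forall>i<m. \<bar>N i f - N i g\<bar> \<le> \<delta>"
    have "D (f, g) \<le> (\<Sum>i<m. \<delta>)" unfolding D_def using cl by (intro sum_mono) auto
    also have "\<dots> = \<psi> p0 / 2" unfolding \<delta>_def using m0 by simp
    also have "\<dots> < \<psi> p0" using pos by simp
    also have "\<dots> \<le> \<psi> (f, g)" using p0(2) fg by auto
    finally have "0 < max 0 (2*r + \<eta> - G (f,g))" unfolding \<psi>_def by simp
    thus "norm (S f - S g) \<le> 2*r + \<eta>" unfolding G_def by simp
  qed
qed

lemma construction:
  fixes F :: "'a::metric_space set" and N :: "nat \<Rightarrow> 'a \<Rightarrow> real"
  assumes n2: "n \<ge> 2" and m: "m = 2^(n-2)" and cF: "compact F"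
    and cN: "\<And>i. i<m \<Longrightarrow> continuous_on F (N i)" and dpos: "0 < \<delta>"
  shows "\<exists>lam. (\<forall>k<n. \<forall>ys. continuous_on F (lam k ys)) \<and>
    (\<forall>f\<in>F. \<forall>g\<in>F. adaptive_info lam n f = adaptive_info lam n g \<longrightarrow> (\<forall>i<m. \<bar>N i f - N i g\<bar> \<le> \<delta>))"
proof -
  have m0: "0 < m" unfolding m by simp
  have "\<forall>i<m. \<exists>b. \<forall>f\<in>F. \<bar>N i f\<bar> \<le> b"
  proof (intro allI impI)
    fix i assume i: "i<m"
    have "compact (N i ` F)" by (rule compact_continuous_image[OF cN[OF i] cF])
    then obtain b where "\<forall>x\<in>N i ` F. norm x \<le> b" using compact_imp_bounded bounded_iff by metis
    thus "\<exists>b. \<forall>f\<in>F. \<bar>N i f\<bar> \<le> b" by auto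
  qed
  then obtain bf where bf: "\<And>i f. i<m \<Longrightarrow> f\<in>F \<Longrightarrow> \<bar>N i f\<bar> \<le> bf i" by metis
  define B where "B = (\<Sum>i<m. \<bar>bf i\<bar>)"
  have B0: "0 \<le> B" unfolding B_def by (intro sum_nonneg) auto
  have Bb: "\<And>i f. i<m \<Longrightarrow> f\<in>F \<Longrightarrow> \<bar>N i f\<bar> \<le> B"
  proof -
    fix i f assume i: "i<m" and f: "f\<in>F"
    have "\<bar>bf i\<bar> \<le> B" unfolding B_def
      by (rule member_le_sum[of i "{..<m}" "\<lambda>i. \<bar>bf i\<bar>"]) (use i in auto)
    thus "\<bar>N i f\<bar> \<le> B" using bf[OF i f] by linarith
  qed
  define s where "s = 2 * real n * 2^n / \<delta>"
  have s0: "0 < s" unfolding s_def using n2 dpos by simp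
  define Bv where "Bv = s * B"
  define L :: int where "L = \<lceil>Bv + real n * 2^n\<rceil> + 1"
  have Lb: "Bv + real n * 2^n + 1 \<le> of_int L" unfolding L_def by linarith
  define M where "M = Bv + real n * 2^n"
  define W where "W = 2 * M + 1"
  have M0: "0 \<le> M" unfolding M_def Bv_def using s0 B0 by simp
  define v where "v = (\<lambda>f i. s * N i f)"
  have vb: "\<And>f i. f \<in> F \<Longrightarrow> i < m \<Longrightarrow> \<bar>v f i\<bar> \<le> Bv"
    unfolding v_def Bv_def using s0 Bb by (simp add: abs_mult mult_left_mono)
  define lam where "lam = (\<lambda>k ys f. if k < n-1 then meas n m k (\<lambda>i. X1 n L k ys (v f i))
                                   else enc m W (\<lambda>i. X1 n L k ys (v f i)))"
  have cont: "\<forall>k<n. \<forall>ys. continuous_on F (lam k ys)"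
  proof (intro allI impI)
    fix k ys assume "k < n"
    have cX: "\<And>i. i<m \<Longrightarrow> continuous_on F (\<lambda>f. X1 n L k ys (v f i))"
      unfolding v_def by (intro continuous_intros cN)
    show "continuous_on F (lam k ys)"
    proof (cases "k < n-1")
      case True
      have "continuous_on F (\<lambda>f. OS m (m - dd m (Suc k)) (\<lambda>i. infdist (X1 n L k ys (v f i) / hh n k) \<int>))"
      proof (rule continuous_on_OS)
        show "1 \<le> m - dd m (Suc k)" "m - dd m (Suc k) \<le> m" using dd_less[OF m0, of k] by auto
        fix i assume "i < m"
        show "continuous_on F (\<lambda>f. infdist (X1 n L k ys (v f i) / hh n k) \<int>)"
          using hh_ge1[of n k] by (intro continuous_intros cX \<open>i<m\<close>) auto
      qed
      thus ?thesis unfolding lam_def meas_def using True by simp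
    next
      case False
      have "continuous_on F (\<lambda>f. enc m W (\<lambda>i. X1 n L k ys (v f i)))"
        by (rule continuous_on_enc) (rule cX)
      thus ?thesis unfolding lam_def using False by simp
    qed
  qed
  have lam_cong: "\<And>j ys1 ys2 f. (\<And>u. X1 n L j ys1 u = X1 n L j ys2 u) \<Longrightarrow> lam j ys1 f = lam j ys2 f"
    by (simp add: lam_def)
  have lam1: "\<And>j ys f. j < n-1 \<Longrightarrow> lam j ys f = meas n m j (\<lambda>i. X1 n L j ys (v f i))"
    by (simp add: lam_def)
  have lam2: "\<And>ys f. lam (n-1) ys f = enc m W (\<lambda>i. X1 n L (n-1) ys (v f i))"
    by (simp add: lam_def)
  have ysj: "\<And>f j. j < n \<Longrightarrow> adaptive_info lam n f ! j = lam j (adaptive_info lam n f) f"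
  proof -
    fix f j assume j: "j < n"
    have eqX: "\<And>u. X1 n L j (adaptive_info lam j f) u = X1 n L j (adaptive_info lam n f) u"
      by (rule X1_cong) (use j in \<open>simp add: ai_nth\<close>)
    have "adaptive_info lam n f ! j = lam j (adaptive_info lam j f) f" by (rule ai_nth[OF j])
    also have "\<dots> = lam j (adaptive_info lam n f) f" by (rule lam_cong[OF eqX])
    finally show "adaptive_info lam n f ! j = lam j (adaptive_info lam n f) f" .
  qed
  have key: "\<And>f i. f \<in> F \<Longrightarrow> i < m \<Longrightarrow>
      X1 n L (n-1) (adaptive_info lam n f) (v f i) \<in> \<int> \<and>
      \<bar>X1 n L (n-1) (adaptive_info lam n f) (v f i) - v f i\<bar> \<le> real n * 2^n"
  proof -
    fix f i assume f: "f \<in> F" and i: "i < m"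
    have cons: "\<And>j. j < n-1 \<Longrightarrow> adaptive_info lam n f ! j
                 = meas n m j (\<lambda>i. X1 n L j (adaptive_info lam n f) (v f i))"
      using ysj lam1 n2 by simp
    show "?thesis f i"
      using chain_final[OF n2 m vb[OF f] Lb cons i] by auto
  qed
  have last: "\<And>f. adaptive_info lam n f ! (n-1) = enc m W (\<lambda>i. X1 n L (n-1) (adaptive_info lam n f) (v f i))"
    using ysj[of "n-1"] lam2 n2 by simp
  show ?thesis
  proof (intro exI[of _ lam] conjI cont ballI impI allI)
    fix f g i assume f: "f \<in> F" and g: "g \<in> F" and eq: "adaptive_info lam n f = adaptive_info lam n g"
      and i: "i < m"
    define ys where "ys = adaptive_info lam n f"
    have kf: "\<And>i. i<m \<Longrightarrow> X1 n L (n-1) ys (v f i) \<in> \<int> \<and> \<bar>X1 n L (n-1) ys (v f i) - v f i\<bar> \<le> real n * 2^n"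
      using key[OF f] unfolding ys_def by blast
    have kg: "\<And>i. i<m \<Longrightarrow> X1 n L (n-1) ys (v g i) \<in> \<int> \<and> \<bar>X1 n L (n-1) ys (v g i) - v g i\<bar> \<le> real n * 2^n"
      using key[OF g] unfolding ys_def eq by blast
    have "\<forall>i<m. X1 n L (n-1) ys (v f i) = X1 n L (n-1) ys (v g i)"
    proof (rule enc_inj[where W=W and M=M])
      show "W \<ge> 2*M+1" "M \<ge> 0" using M0 unfolding W_def by auto
      fix i assume i: "i < m"
      show "X1 n L (n-1) ys (v f i) \<in> \<int> \<and> \<bar>X1 n L (n-1) ys (v f i)\<bar> \<le> M"
        using kf[OF i] vb[OF f i] unfolding M_def by auto
      show "X1 n L (n-1) ys (v g i) \<in> \<int> \<and> \<bar>X1 n L (n-1) ys (v g i)\<bar> \<le> M"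
        using kg[OF i] vb[OF g i] unfolding M_def by auto
    next
      show "enc m W (\<lambda>i. X1 n L (n-1) ys (v f i)) = enc m W (\<lambda>i. X1 n L (n-1) ys (v g i))"
        using last[of f] last[of g] unfolding ys_def eq by simp
    qed
    hence "\<bar>v f i - v g i\<bar> \<le> 2 * (real n * 2^n)" using kf[OF i] kg[OF i] i by auto
    moreover have "v f i - v g i = s * (N i f - N i g)" unfolding v_def by (simp add: algebra_simps)
    ultimately have "s * \<bar>N i f - N i g\<bar> \<le> 2 * real n * 2^n" using s0 by (simp add: abs_mult)
    hence "\<bar>N i f - N i g\<bar> \<le> 2 * real n * 2^n / s" using s0 by (simp add: pos_le_divide_eq mult.commute)
    also have "\<dots> = \<delta>" unfolding s_def using dpos n2 by simp
    finally show "\<bar>N i f - N i g\<bar> \<le> \<delta>" .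
  qed
qed

theorem theorem3:
  fixes F :: "'a::metric_space set" and S :: "'a \<Rightarrow> 'b::real_normed_vector" and n :: nat
  assumes "compact F" and "continuous_on F S" and "n \<ge> 2"
  shows "e_cont F S n \<le> 2 * e_cont_non F S (2 ^ (n - 2))"
proof (cases "F = {}")
  case True
  define A0 where "A0 = (\<lambda>f::'a. (\<lambda>ys::real list. 0::'b) (adaptive_info (\<lambda>_ _ (_::'a). 0::real) n f))"
  have mem: "A0 \<in> {(\<lambda>f. Phi (adaptive_info lam n f)) | (lam :: nat \<Rightarrow> real list \<Rightarrow> 'a \<Rightarrow> real) (Phi :: real list \<Rightarrow> 'b).
                 \<forall>k<n. \<forall>ys. continuous_on F (lam k ys)}"
    unfolding A0_def by (intro CollectI exI[of _ "\<lambda>_ _ _. 0"] exI[of _ "\<lambda>_. 0"]) auto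
  have "e_cont F S n \<le> wc_error F S A0" unfolding e_cont_def by (rule INF_lower[OF mem])
  also have "\<dots> = -\<infinity>" unfolding wc_error_def True by (simp add: bot_ereal_def)
  finally show ?thesis by simp
next
  case False
  then obtain f0 where f0: "f0 \<in> F" by blast
  have Wnn: "\<And>A. 0 \<le> wc_error F S A"
    unfolding wc_error_def by (rule SUP_upper2[OF f0]) simp
  have E0: "0 \<le> e_cont_non F S (2 ^ (n - 2))" unfolding e_cont_non_def by (rule INF_greatest) (rule Wnn)
  show ?thesis
  proof (rule ereal_le_epsilon2)
    fix e :: real assume e: "0 < e"
    show "e_cont F S n \<le> 2 * e_cont_non F S (2 ^ (n - 2)) + ereal e"
    proof (cases "e_cont_non F S (2 ^ (n - 2)) = \<infinity>")
      case True thus ?thesis by simp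
    next
      case False
      then obtain E' where E': "e_cont_non F S (2 ^ (n - 2)) = ereal E'" using E0
        by (cases "e_cont_non F S (2 ^ (n - 2))") auto
      have E'0: "0 \<le> E'" using E0 E' by simp
      have "e_cont_non F S (2 ^ (n - 2)) < ereal (E' + e/3)" using E' e by simp
      then obtain A where Amem: "A \<in> {(\<lambda>f. Phi (map (\<lambda>i::nat. N i f) [0..<2^(n-2)])) | (N :: nat \<Rightarrow> 'a \<Rightarrow> real) (Phi :: real list \<Rightarrow> 'b).
                 \<forall>i<2^(n-2). continuous_on F (N i)}" and Aless: "wc_error F S A < ereal (E' + e/3)"
        unfolding e_cont_non_def by (auto simp: INF_less_iff)
      have "\<exists>(N :: nat \<Rightarrow> 'a \<Rightarrow> real) (Phi :: real list \<Rightarrow> 'b). A = (\<lambda>f. Phi (map (\<lambda>i::nat. N i f) [0..<2^(n-2)])) \<and> (\<forall>i<2^(n-2). continuous_on F (N i))"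
        using Amem by (simp only: mem_Collect_eq)
      then obtain N :: "nat \<Rightarrow> 'a \<Rightarrow> real" and Phi :: "real list \<Rightarrow> 'b" where A: "A = (\<lambda>f. Phi (map (\<lambda>i::nat. N i f) [0..<2^(n-2)]))"
        and cN: "\<forall>i<2^(n-2). continuous_on F (N i)" by blast
      have err: "\<And>f. f \<in> F \<Longrightarrow> norm (S f - Phi (map (\<lambda>i. N i f) [0..<2^(n-2)])) \<le> E' + e/3"
      proof -
        fix f assume f: "f \<in> F"
        have "ereal (norm (S f - A f)) \<le> wc_error F S A" unfolding wc_error_def by (rule SUP_upper[OF f])
        hence "ereal (norm (S f - A f)) < ereal (E' + e/3)" using Aless by (rule le_less_trans)
        thus "norm (S f - Phi (map (\<lambda>i. N i f) [0..<2^(n-2)])) \<le> E' + e/3" unfolding A by simp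
      qed
      have cN': "\<And>i. i < 2^(n-2) \<Longrightarrow> continuous_on F (N i)" using cN by blast
      have m0': "(0::nat) < 2^(n-2)" by simp
      have eta': "0 < e/3" using e by simp
      obtain \<delta> where dpos: "0 < \<delta>" and sep: "\<forall>f\<in>F. \<forall>g\<in>F. (\<forall>i<2^(n-2). \<bar>N i f - N i g\<bar> \<le> \<delta>)
              \<longrightarrow> norm (S f - S g) \<le> 2*(E' + e/3) + e/3"
        using separation[where N=N, OF assms(1,2) cN' m0' err eta'] by blast
      obtain lam where lc: "\<forall>k<n. \<forall>ys. continuous_on F (lam k ys)"
        and li: "\<forall>f\<in>F. \<forall>g\<in>F. adaptive_info lam n f = adaptive_info lam n g \<longrightarrow> (\<forall>i<2^(n-2). \<bar>N i f - N i g\<bar> \<le> \<delta>)"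
        using construction[where N=N, OF assms(3) refl assms(1) cN' dpos] by blast
      define Phi' where "Phi' = (\<lambda>ys. S (SOME g. g \<in> F \<and> adaptive_info lam n g = ys))"
      have bound: "\<And>f. f \<in> F \<Longrightarrow> norm (S f - Phi' (adaptive_info lam n f)) \<le> 2*(E' + e/3) + e/3"
      proof -
        fix f assume f: "f \<in> F"
        define g where "g = (SOME g. g \<in> F \<and> adaptive_info lam n g = adaptive_info lam n f)"
        have g: "g \<in> F \<and> adaptive_info lam n g = adaptive_info lam n f"
          unfolding g_def by (rule someI[of _ f]) (use f in simp)
        have "norm (S f - S g) \<le> 2*(E' + e/3) + e/3" using sep li f g by metis
        thus "norm (S f - Phi' (adaptive_info lam n f)) \<le> 2*(E' + e/3) + e/3"
          unfolding Phi'_def g_def[symmetric] .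
      qed
      have mem: "(\<lambda>f. Phi' (adaptive_info lam n f)) \<in> {(\<lambda>f. Phi (adaptive_info lam n f)) | (lam :: nat \<Rightarrow> real list \<Rightarrow> 'a \<Rightarrow> real) (Phi :: real list \<Rightarrow> 'b).
                 \<forall>k<n. \<forall>ys. continuous_on F (lam k ys)}" using lc by blast
      have "e_cont F S n \<le> wc_error F S (\<lambda>f. Phi' (adaptive_info lam n f))"
        unfolding e_cont_def by (rule INF_lower[OF mem])
      also have "\<dots> \<le> ereal (2*(E' + e/3) + e/3)"
        unfolding wc_error_def by (rule SUP_least) (use bound in simp)
      also have "\<dots> = 2 * e_cont_non F S (2 ^ (n - 2)) + ereal e" using E' by (simp add: algebra_simps)
      finally show ?thesis .
    qed
  qed
qed

end
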